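(* Let $M\geq 1$ be an integer and let $(\tau^\prime,R)$ be an $M$-layer medium for transmission, with $\tau^\prime=(\tau_0,\ldots,\tau_{M+1})$, $\tau=(\tau_0,\ldots,\tau_M)$, $R=(R_0,\ldots,R_M)$, and write $|\tau^\prime|=\tau_0+\cdots+\tau_{M+1}$. Then \[ H^{(\tau^\prime,R)}(t)=\sum_{k\in\{0\}\times\mathbb{Z}^M_+}b(R,k)\,\delta\bigl(t-\tfrac{1}{2}|\tau^\prime|-\langle k,\tau\rangle\bigr), \] where for each $k\in\{0\}\times\mathbb{Z}^M_+$, \[ b(R,k)=\sum_{0\leq m\leq\min\{k,\tilde{k}\}}\binom{k}{m}\binom{\tilde{k}}{m}(-R)^{\tilde{k}-m}R^{k-m}T^{2m+\mathbb{1}}, \] the sum being over $m\in\mathbb{Z}^{M+1}$.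
   Context: Fix depths $z_{-1}<z_0<\cdots<z_M<z_{M+1}$. The medium consists of positive reals $\tau^\prime=(\tau_0,\ldots,\tau_{M+1})$ ($\tau_j/2$ is the time to traverse between $z_{j-1}$ and $z_j$) and reals $R=(R_0,\ldots,R_M)$ with $-1<R_n<1$; $T_n=\sqrt{1-R_n^2}$, $T=(T_0,\ldots,T_M)$. $\mathbb{Z}_+$ denotes the nonnegative integers. A transmission scattering sequence is a finite sequence $\mathsf{p}=(\mathsf{p}_0,\ldots,\mathsf{p}_L)$ with $\mathsf{p}_0=z_{-1}$, $\mathsf{p}_L=z_{M+1}$, $\mathsf{p}_i\in\{z_0,\ldots,z_M\}$ for $1\le i\le L-1$, and for every $0\le i\le L-1$ there is $-1\le j\le M$ with $\{\mathsf{p}_i,\mathsf{p}_{i+1}\}=\{z_j,z_{j+1}\}$. Its weight is $w(\mathsf{p})=\prod_{i=1}^{L-1}w_i$, where if $\mathsf{p}_i=z_j$: $w_i=R_j$ if $\mathsf{p}_{i-1}=\mathsf{p}_{i+1}=z_{j-1}$; $w_i=-R_j$ if $\mathsf{p}_{i-1}=\mathsf{p}_{i+1}=z_{j+1}$; $w_i=T_j$ otherwise. Its arrival time is $\sigma(\mathsf{p})=\sum_{i=0}^{L-1}\tau_{j_i}/2$ where step $i$ goes between $z_{j_i-1}$ and $z_{j_i}$ ($0\le j_i\le M+1$). The transmission Green's function (velocity impulse response recorded at $z_{M+1}$ for a downward unit plane-wave impulse started at $z_{-1}$) is $H^{(\tau^\prime,R)}(t)=\sum_{\mathsf{p}}w(\mathsf{p})\delta(t-\sigma(\mathsf{p}))$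 over all transmission scattering sequences, terms with equal arrival times combined. Vector conventions: $\tilde{k}=(k_1,\ldots,k_M,0)$; $\mathbb{1}=(1,\ldots,1)$; $\min$ and $\le$ entrywise; $\langle k,\tau\rangle=\sum_{n=0}^M k_n\tau_n$; $s^d=\prod_n s_n^{d_n}$ (with $0^0=1$); $\binom{x}{y}=\prod_n\binom{x_n}{y_n}$. *)

theory Defs
  imports Complex_Main
begin

text \<open>Depth z_j is encoded by the natural number j+1, so positions range over
  0 (= z_{-1}) .. M+2 (= z_{M+1}).  A step between positions a and a+1 is a step
  between z_{a-1} and z_a, traversed in time tau_a / 2.
  tau' :: nat => real (indices 0..M+1), R :: nat => real (indices 0..M).\<close>

definition Tco :: "(nat \<Rightarrow> real) \<Rightarrow> nat \<Rightarrow> real" where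
  "Tco R n = sqrt (1 - (R n)\<^sup>2)"

definition trans_seq :: "nat \<Rightarrow> nat list \<Rightarrow> bool" where
  "trans_seq M p \<longleftrightarrow> length p \<ge> 2 \<and> p ! 0 = 0 \<and> p ! (length p - 1) = M + 2 \<and>
     (\<forall>i. 1 \<le> i \<and> i < length p - 1 \<longrightarrow> 1 \<le> p ! i \<and> p ! i \<le> M + 1) \<and>
     (\<forall>i < length p - 1. p ! (i+1) = p ! i + 1 \<or> p ! i = p ! (i+1) + 1)"

definition step_weight :: "(nat \<Rightarrow> real) \<Rightarrow> nat list \<Rightarrow> nat \<Rightarrow> real" where
  "step_weight R p i =
     (let j = p ! i - 1 in
      if p ! (i - 1) + 1 = p ! i \<and> p ! (i + 1) + 1 = p ! i then R j
      else if p ! (i - 1) = p ! i + 1 \<and> p ! (i + 1) = p ! i + 1 then - R j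
      else Tco R j)"

definition seq_weight :: "(nat \<Rightarrow> real) \<Rightarrow> nat list \<Rightarrow> real" where
  "seq_weight R p = (\<Prod>i \<in> {1..<length p - 1}. step_weight R p i)"

definition arrival :: "(nat \<Rightarrow> real) \<Rightarrow> nat list \<Rightarrow> real" where
  "arrival tau' p = (\<Sum>i < length p - 1. tau' (min (p ! i) (p ! (i+1))) / 2)"

text \<open>Coefficient of delta(t - s) in the transmission Green's function
  (all sequences with arrival time s combined).\<close>
definition greenH :: "nat \<Rightarrow> (nat \<Rightarrow> real) \<Rightarrow> (nat \<Rightarrow> real) \<Rightarrow> real \<Rightarrow> real" where
  "greenH M tau' R s = (\<Sum>p \<in> {p. trans_seq M p \<and> arrival tau' p = s}. seq_weight R p)"

text \<open>Multi-indices k in {0} x Z_+^M, as functions nat => nat supported on 1..M.\<close>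
definition kset :: "nat \<Rightarrow> (nat \<Rightarrow> nat) set" where
  "kset M = {k. k 0 = 0 \<and> (\<forall>n > M. k n = 0)}"

definition ktilde :: "nat \<Rightarrow> (nat \<Rightarrow> nat) \<Rightarrow> nat \<Rightarrow> nat" where
  "ktilde M k n = (if n < M then k (n + 1) else 0)"

definition bcoef :: "nat \<Rightarrow> (nat \<Rightarrow> real) \<Rightarrow> (nat \<Rightarrow> nat) \<Rightarrow> real" where
  "bcoef M R k =
    (\<Sum>m \<in> {m. (\<forall>n \<le> M. m n \<le> min (k n) (ktilde M k n)) \<and> (\<forall>n > M. m n = 0)}.
       \<Prod>n \<le> M. real (k n choose m n) * real (ktilde M k n choose m n)
                 * (- R n) ^ (ktilde M k n - m n) * (R n) ^ (k n - m n)
                 * (Tco R n) ^ (2 * m n + 1))"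

definition rhsH :: "nat \<Rightarrow> (nat \<Rightarrow> real) \<Rightarrow> (nat \<Rightarrow> real) \<Rightarrow> real \<Rightarrow> real" where
  "rhsH M tau' R s =
    (\<Sum>k \<in> {k \<in> kset M. (\<Sum>n \<le> M + 1. tau' n) / 2 + (\<Sum>n \<le> M. real (k n) * tau' n) = s}.
       bcoef M R k)"

end

theory Submission
  imports Defs "HOL-Library.FuncSet"
begin


fun Wf :: "real \<Rightarrow> real \<Rightarrow> bool \<Rightarrow> nat \<Rightarrow> nat \<Rightarrow> real" where
  "Wf r t ab u 0 = (if u = 0 then 1 else 0)"
| "Wf r t ab u (Suc d) =
     (if u > 0 then (if ab then r else t) * Wf r t True (u - 1) (Suc d) else 0)
     + (if ab then t else - r) * Wf r t False u d"

definition cfA :: "real \<Rightarrow> real \<Rightarrow> nat \<Rightarrow> nat \<Rightarrow> real" where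
  "cfA r t q j = (\<Sum>m\<le>q. real (q choose m) * real (j choose m) * r ^ (q - m) * (- r) ^ (j - m) * t ^ (2*m+1))"

definition cfB :: "real \<Rightarrow> real \<Rightarrow> nat \<Rightarrow> nat \<Rightarrow> real" where
  "cfB r t q j = (\<Sum>m\<le>q. real (q choose m) * real (j choose Suc m) * r ^ (q - m) * (- r) ^ (j - Suc m) * t ^ (2*m+2))"

lemma Wf_B0: "Wf r t False 0 j = (- r) ^ j"
  by (induction j) auto

lemma Wf_closed: "Wf r t True q (Suc j) = cfA r t q j \<and> Wf r t False (Suc q) j = cfB r t q j"
proof (induction "q + j" arbitrary: q j rule: less_induct)
  case less
  have A: "Wf r t True q (Suc j) = cfA r t q j"
  proof (cases q)
    case 0
    then show ?thesis by (simp add: cfA_def Wf_B0)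
  next
    case (Suc p)
    have IH1: "Wf r t True p (Suc j) = cfA r t p j" using less[of p j] Suc by auto
    have IH2: "Wf r t False (Suc p) j = cfB r t p j" using less[of p j] Suc by auto
    have "Wf r t True q (Suc j) = r * cfA r t p j + t * cfB r t p j"
      using Suc IH1 IH2 by simp
    also have "\<dots> = cfA r t (Suc p) j"
    proof -
      define X where "X m = r ^ (Suc p - m) * (- r) ^ (j - m) * t ^ (2*m+1)" for m
      have e1: "r * cfA r t p j = (\<Sum>m\<le>Suc p. real (p choose m) * real (j choose m) * X m)"
        unfolding cfA_def X_def sum_distrib_left
        by (simp add: Suc_diff_le mult_ac)
      have e2: "t * cfB r t p j = (\<Sum>m\<le>p. real (p choose m) * real (j choose Suc m) * X (Suc m))"
        unfolding cfB_def X_def sum_distrib_left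
        by (intro sum.cong) (auto simp: mult_ac)
      have e3: "cfA r t (Suc p) j = (\<Sum>m\<le>Suc p. real (Suc p choose m) * real (j choose m) * X m)"
        unfolding cfA_def X_def by (simp add: mult_ac)
      have "(\<Sum>m\<le>Suc p. real (Suc p choose m) * real (j choose m) * X m)
          = (\<Sum>m\<le>Suc p. real (p choose m) * real (j choose m) * X m)
            + (\<Sum>m\<le>Suc p. (if m = 0 then 0 else real (p choose (m - 1))) * real (j choose m) * X m)"
      proof (subst sum.distrib[symmetric], rule sum.cong[OF refl])
        fix m assume "m \<in> {..Suc p}"
        show "real (Suc p choose m) * real (j choose m) * X m =
          real (p choose m) * real (j choose m) * X m +
          (if m = 0 then 0 else real (p choose (m - 1))) * real (j choose m) * X m"
        proof (cases m)
          case 0 then show ?thesis by simp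
        next
          case (Suc y) then show ?thesis by (simp add: algebra_simps)
        qed
      qed
      also have "(\<Sum>m\<le>Suc p. (if m = 0 then 0 else real (p choose (m - 1))) * real (j choose m) * X m)
          = (\<Sum>m\<le>p. real (p choose m) * real (j choose Suc m) * X (Suc m))"
        by (subst sum.atMost_Suc_shift) simp
      finally show ?thesis using e1 e2 e3 by simp
    qed
    finally show ?thesis using Suc by simp
  qed
  have B: "Wf r t False (Suc q) j = cfB r t q j"
  proof (cases j)
    case 0
    then show ?thesis by (simp add: cfB_def)
  next
    case (Suc i)
    have IH1: "Wf r t True q (Suc i) = cfA r t q i" using less[of q i] Suc by auto
    have IH2: "Wf r t False (Suc q) i = cfB r t q i" using less[of q i] Suc by auto
    have "Wf r t False (Suc q) j = t * cfA r t q i + (- r) * cfB r t q i"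
      using Suc IH1 IH2 by simp
    also have "\<dots> = cfB r t q (Suc i)"
      unfolding cfA_def cfB_def sum_distrib_left sum.distrib[symmetric]
    proof (rule sum.cong[OF refl])
      fix m assume "m \<in> {..q}"
      show "t * (real (q choose m) * real (i choose m) * r ^ (q - m) * (- r) ^ (i - m) * t ^ (2 * m + 1)) +
         - r * (real (q choose m) * real (i choose Suc m) * r ^ (q - m) * (- r) ^ (i - Suc m) * t ^ (2 * m + 2)) =
         real (q choose m) * real (Suc i choose Suc m) * r ^ (q - m) * (- r) ^ (Suc i - Suc m) * t ^ (2 * m + 2)"
      proof (cases "m < i")
        case True
        then have "(- r) ^ (i - m) = (- r) * (- r) ^ (i - Suc m)"
          by (metis Suc_diff_Suc power_Suc)
        then show ?thesis by (simp add: algebra_simps)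
      next
        case False
        then have z: "i choose Suc m = 0" by simp
        show ?thesis
        proof (cases "m = i")
          case True then show ?thesis using z by (simp add: algebra_simps)
        next
          case False
          then have "i choose m = 0" using \<open>\<not> m < i\<close> by simp
          then show ?thesis using \<open>\<not> m < i\<close> by (simp add: \<open>i choose m = 0\<close> z)
        qed
      qed
    qed
    finally show ?thesis using Suc by simp
  qed
  show ?case using A B by blast
qed



fun okw :: "nat \<Rightarrow> nat list \<Rightarrow> bool" where
  "okw M [] = False"
| "okw M [x] = (x = M + 2)"
| "okw M (x # y # r) = (1 \<le> x \<and> x \<le> M + 1 \<and> (y = x + 1 \<or> x = y + 1) \<and> okw M (y # r))"

fun cross :: "nat list \<Rightarrow> nat \<Rightarrow> nat" where
  "cross [] = (\<lambda>l. 0)"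
| "cross [x] = (\<lambda>l. 0)"
| "cross (x # y # r) = (\<lambda>l. (if l = min x y then 1 else 0) + cross (y # r) l)"

definition Walks :: "nat \<Rightarrow> nat \<Rightarrow> (nat \<Rightarrow> nat) \<Rightarrow> nat list set" where
  "Walks M a c = {p. okw M p \<and> hd p = a \<and> cross p = c}"

definition swd :: "(nat \<Rightarrow> real) \<Rightarrow> bool \<Rightarrow> nat \<Rightarrow> nat \<Rightarrow> real" where
  "swd R d x y = (if d \<and> y + 1 = x then R (x - 1) else if \<not> d \<and> y = x + 1 then - R (x - 1) else Tco R (x - 1))"

fun wfd :: "(nat \<Rightarrow> real) \<Rightarrow> bool \<Rightarrow> nat list \<Rightarrow> real" where
  "wfd R d (x # y # r) = swd R d x y * wfd R (y = x + 1) (y # r)"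
| "wfd R d _ = 1"

definition cons :: "nat \<Rightarrow> nat \<Rightarrow> (nat \<Rightarrow> nat) \<Rightarrow> bool" where
  "cons M a c \<longleftrightarrow> 1 \<le> a \<and> a \<le> M + 2 \<and> c 0 = 0 \<and> (\<forall>l > M + 1. c l = 0) \<and> c (M + 1) \<le> 1 \<and>
     (\<forall>l. 1 \<le> l \<and> l \<le> M + 1 \<longrightarrow> (odd (c l) \<longleftrightarrow> a \<le> l))"

definition prodW :: "nat \<Rightarrow> (nat \<Rightarrow> real) \<Rightarrow> nat \<Rightarrow> bool \<Rightarrow> (nat \<Rightarrow> nat) \<Rightarrow> real" where
  "prodW M R a d c = (\<Prod>b\<in>{1..M+1}. Wf (R (b - 1)) (Tco R (b - 1)) (if b = a then d else a < b)
                          (c (b - 1) div 2) ((c b + 1) div 2))"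

lemma okw_set: "okw M p \<Longrightarrow> set p \<subseteq> {..M+2}"
  by (induction M p rule: okw.induct) auto

lemma okw_cross_zero: "okw M p \<Longrightarrow> l > M + 1 \<Longrightarrow> cross p l = 0"
  by (induction M p rule: okw.induct) auto

lemma okw_length: "okw M p \<Longrightarrow> length p = Suc (\<Sum>l\<le>M+1. cross p l)"
proof (induction M p rule: okw.induct)
  case (3 M x y r)
  then have "min x y \<le> M + 1" by auto
  then have "(\<Sum>l\<le>M+1. cross (x # y # r) l) = 1 + (\<Sum>l\<le>M+1. cross (y # r) l)"
    by (simp add: sum.distrib)
  then show ?case using 3 by simp
qed auto

lemma finite_Walks: "finite (Walks M a c)"
proof -
  have "Walks M a c \<subseteq> {xs. set xs \<subseteq> {..M+2} \<and> length xs = Suc (\<Sum>l\<le>M+1. c l)}"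
    unfolding Walks_def using okw_set okw_length by blast
  moreover have "finite {xs. set xs \<subseteq> {..M+2} \<and> length xs = Suc (\<Sum>l\<le>M+1. c l)}"
    by (rule finite_lists_length_eq) simp
  ultimately show ?thesis by (rule finite_subset)
qed

lemma Walks_term: "Walks M (M + 2) c = (if c = (\<lambda>_. 0) then {[M + 2]} else {})"
proof -
  have "p \<in> Walks M (M + 2) c \<longleftrightarrow> p = [M+2] \<and> c = (\<lambda>_. 0)" for p
  proof
    assume "p \<in> Walks M (M + 2) c"
    then have "okw M p" "hd p = M + 2" "cross p = c" by (auto simp: Walks_def)
    then show "p = [M+2] \<and> c = (\<lambda>_. 0)"
      by (cases "(M,p)" rule: okw.cases) simp_all
  qed (auto simp: Walks_def)
  then show ?thesis by auto
qed


lemma Walks_step: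
  assumes "1 \<le> a" "a \<le> M + 1"
  shows "Walks M a c =
     (if 0 < c a then (#) a ` Walks M (a + 1) (c(a := c a - 1)) else {}) \<union>
     (if 0 < c (a - 1) then (#) a ` Walks M (a - 1) (c(a - 1 := c (a - 1) - 1)) else {})"
proof (intro set_eqI iffI)
  fix p assume "p \<in> Walks M a c"
  then have p: "okw M p" "hd p = a" "cross p = c" by (auto simp: Walks_def)
  obtain x q where pq: "p = x # q" using p(1) by (cases p) auto
  then have xa: "x = a" using p(2) by simp
  obtain y r where "q = y # r"
  proof (cases q)
    case Nil
    then show ?thesis using p(1) pq xa assms by simp
  next
    case (Cons y r)
    then show ?thesis using that by blast
  qed
  then have pe: "p = a # y # r" using pq xa by simp
  have ok: "okw M (y # r)" "y = a + 1 \<or> a = y + 1" using p pe by auto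
  have cc: "c = (\<lambda>l. (if l = min a y then 1 else 0) + cross (y # r) l)" using p(3) pe by simp
  show "p \<in> (if 0 < c a then (#) a ` Walks M (a + 1) (c(a := c a - 1)) else {}) \<union>
     (if 0 < c (a - 1) then (#) a ` Walks M (a - 1) (c(a - 1 := c (a - 1) - 1)) else {})"
  proof (cases "y = a + 1")
    case True
    have c1: "c a > 0" using cc True by simp
    have c2: "cross (y # r) = c(a := c a - 1)" using cc True by (simp add: fun_eq_iff)
    have "y # r \<in> Walks M (a + 1) (c(a := c a - 1))"
      unfolding Walks_def using True ok(1) c2 by simp
    then have "p \<in> (#) a ` Walks M (a + 1) (c(a := c a - 1))" unfolding pe by (rule imageI)
    then show ?thesis using c1 by (intro UnI1) simp
  next
    case False
    then have y: "y = a - 1" using ok by auto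
    have my: "min a y = a - 1" using y by simp
    have c1: "c (a - 1) > 0" using cc my by simp
    have c2: "cross (y # r) = c(a - 1 := c (a - 1) - 1)" using cc my by (simp add: fun_eq_iff)
    have "y # r \<in> Walks M (a - 1) (c(a - 1 := c (a - 1) - 1))"
      unfolding Walks_def using y ok(1) c2 by simp
    then have "p \<in> (#) a ` Walks M (a - 1) (c(a - 1 := c (a - 1) - 1))" unfolding pe by (rule imageI)
    then show ?thesis using c1 by (intro UnI2) simp
  qed
next
  fix p assume p: "p \<in> (if 0 < c a then (#) a ` Walks M (a + 1) (c(a := c a - 1)) else {}) \<union>
     (if 0 < c (a - 1) then (#) a ` Walks M (a - 1) (c(a - 1 := c (a - 1) - 1)) else {})"
  show "p \<in> Walks M a c"
  proof (cases "0 < c a \<and> p \<in> (#) a ` Walks M (a + 1) (c(a := c a - 1))")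
    case True
    then obtain q where q: "p = a # q" "okw M q" "hd q = a + 1" "cross q = c(a := c a - 1)" "0 < c a"
      by (auto simp: Walks_def)
    then obtain r where qr: "q = (a + 1) # r" by (cases q) auto
    have "cross p = c" using q qr by (simp add: fun_eq_iff)
    then show ?thesis using q qr assms by (simp add: Walks_def)
  next
    case False
    then have "0 < c (a - 1) \<and> p \<in> (#) a ` Walks M (a - 1) (c(a - 1 := c (a - 1) - 1))"
      using p by (auto split: if_splits)
    then obtain q where q: "p = a # q" "okw M q" "hd q = a - 1" "cross q = c(a - 1 := c (a - 1) - 1)" "0 < c (a - 1)"
      by (auto simp: Walks_def)
    then obtain r where qr: "q = (a - 1) # r" by (cases q) auto
    have "a \<noteq> 1"
    proof
      assume "a = 1"
      then show False using q(2) qr by (cases r) auto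
    qed
    then have a2: "(a - 1) + 1 = a" "min a (a - 1) = a - 1" using assms by auto
    have "cross p = c" using q(1,4,5) qr a2(2) by (simp add: fun_eq_iff)
    moreover have "okw M p" using q(1,2) qr assms a2(1) by simp
    ultimately show ?thesis using q(1) by (simp add: Walks_def)
  qed
qed



lemma wfd_cons: "q \<noteq> [] \<Longrightarrow> wfd R d (a # q) = swd R d a (hd q) * wfd R (hd q = a + 1) q"
  by (cases q) auto

lemma Walks_hd: "q \<in> Walks M a c \<Longrightarrow> q \<noteq> [] \<and> hd q = a"
  unfolding Walks_def by (cases q) auto

lemma sum_step:
  assumes "1 \<le> a" "a \<le> M + 1"
  shows "sum (wfd R d) (Walks M a c) =
     (if 0 < c a then swd R d a (a + 1) * sum (wfd R True) (Walks M (a + 1) (c(a := c a - 1))) else 0) +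
     (if 0 < c (a - 1) then swd R d a (a - 1) * sum (wfd R False) (Walks M (a - 1) (c(a - 1 := c (a - 1) - 1))) else 0)"
proof -
  define A where "A = (if 0 < c a then (#) a ` Walks M (a + 1) (c(a := c a - 1)) else {})"
  define B where "B = (if 0 < c (a - 1) then (#) a ` Walks M (a - 1) (c(a - 1 := c (a - 1) - 1)) else {})"
  have W: "Walks M a c = A \<union> B" unfolding A_def B_def by (rule Walks_step[OF assms])
  have fA: "finite A" and fB: "finite B" unfolding A_def B_def by (auto intro: finite_Walks)
  have dAB: "A \<inter> B = {}"
  proof -
    have "p \<notin> B" if pA: "p \<in> A" for p
    proof
      assume "p \<in> B"
      then obtain q2 where "p = a # q2" "q2 \<in> Walks M (a - 1) (c(a - 1 := c (a - 1) - 1))"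
        unfolding B_def by (auto split: if_splits)
      moreover obtain q1 where "p = a # q1" "q1 \<in> Walks M (a + 1) (c(a := c a - 1))"
        using pA unfolding A_def by (auto split: if_splits)
      ultimately have "q1 = q2" by simp
      then have "a + 1 = a - 1" using Walks_hd[OF \<open>q1 \<in> _\<close>] Walks_hd[OF \<open>q2 \<in> _\<close>] by simp
      then show False by simp
    qed
    then show ?thesis by blast
  qed
  have sA: "sum (wfd R d) A = (if 0 < c a then swd R d a (a + 1) * sum (wfd R True) (Walks M (a + 1) (c(a := c a - 1))) else 0)"
  proof (cases "0 < c a")
    case True
    have "sum (wfd R d) A = sum (wfd R d \<circ> (#) a) (Walks M (a + 1) (c(a := c a - 1)))"
      unfolding A_def using True by (simp add: sum.reindex)
    also have "\<dots> = sum (\<lambda>q. swd R d a (a + 1) * wfd R True q) (Walks M (a + 1) (c(a := c a - 1)))"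
      by (rule sum.cong) (auto dest: Walks_hd simp: wfd_cons)
    finally show ?thesis using True by (simp add: sum_distrib_left)
  qed (simp add: A_def)
  have sB: "sum (wfd R d) B = (if 0 < c (a - 1) then swd R d a (a - 1) * sum (wfd R False) (Walks M (a - 1) (c(a - 1 := c (a - 1) - 1))) else 0)"
  proof (cases "0 < c (a - 1)")
    case True
    have "sum (wfd R d) B = sum (wfd R d \<circ> (#) a) (Walks M (a - 1) (c(a - 1 := c (a - 1) - 1)))"
      unfolding B_def using True by (simp add: sum.reindex)
    also have "\<dots> = sum (\<lambda>q. swd R d a (a - 1) * wfd R False q) (Walks M (a - 1) (c(a - 1 := c (a - 1) - 1)))"
    proof (rule sum.cong[OF refl])
      fix q assume "q \<in> Walks M (a - 1) (c(a - 1 := c (a - 1) - 1))"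
      then have "q \<noteq> []" "hd q = a - 1" using Walks_hd by auto
      moreover have "a - 1 \<noteq> a + 1" using assms by simp
      ultimately show "(wfd R d \<circ> (#) a) q = swd R d a (a - 1) * wfd R False q"
        by (simp add: wfd_cons)
    qed
    finally show ?thesis using True by (simp add: sum_distrib_left)
  qed (simp add: B_def)
  show ?thesis unfolding W by (simp add: sum.union_disjoint[OF fA fB dAB] sA sB)
qed

definition Fb :: "nat \<Rightarrow> (nat \<Rightarrow> real) \<Rightarrow> nat \<Rightarrow> bool \<Rightarrow> (nat \<Rightarrow> nat) \<Rightarrow> nat \<Rightarrow> real" where
  "Fb M R a d c b = Wf (R (b - 1)) (Tco R (b - 1)) (if b = a then d else a < b)
                          (c (b - 1) div 2) ((c b + 1) div 2)"

lemma prodW_Fb: "prodW M R a d c = (\<Prod>b\<in>{1..M+1}. Fb M R a d c b)"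
  unfolding prodW_def Fb_def ..

lemma prodW_step:
  assumes cs: "cons M a c" and aM: "a \<le> M + 1"
  shows "prodW M R a d c =
     (if 0 < c a then swd R d a (a + 1) * prodW M R (a + 1) True (c(a := c a - 1)) else 0) +
     (if 0 < c (a - 1) then swd R d a (a - 1) * prodW M R (a - 1) False (c(a - 1 := c (a - 1) - 1)) else 0)"
proof -
  let ?S = "{1..M+1}"
  have a1: "1 \<le> a" using cs by (simp add: cons_def)
  have aS: "a \<in> ?S" using a1 aM by simp
  have oa: "odd (c a)" using cs a1 aM by (simp add: cons_def)
  then have ca: "0 < c a" by (cases "c a") auto
  define c1 where "c1 = c(a := c a - 1)"
  define c2 where "c2 = c(a - 1 := c (a - 1) - 1)"
  define P where "P = (\<Prod>b\<in>?S - {a}. Fb M R a d c b)"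
  have p0: "prodW M R a d c = Fb M R a d c a * P"
    unfolding prodW_Fb P_def using prod.remove[OF _ aS] by simp
  have p1: "prodW M R (a + 1) True c1 = Fb M R (a + 1) True c1 a * P"
  proof -
    have "prodW M R (a + 1) True c1 = Fb M R (a + 1) True c1 a * (\<Prod>b\<in>?S - {a}. Fb M R (a + 1) True c1 b)"
      unfolding prodW_Fb using prod.remove[OF _ aS] by simp
    also have "(\<Prod>b\<in>?S - {a}. Fb M R (a + 1) True c1 b) = P"
      unfolding P_def
    proof (rule prod.cong[OF refl])
      fix b assume b: "b \<in> ?S - {a}"
      have i: "(if b = a + 1 then True else a + 1 < b) = (if b = a then d else a < b)" using b by auto
      have u: "c1 (b - 1) div 2 = c (b - 1) div 2"
      proof (cases "b - 1 = a")
        case True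
        then show ?thesis unfolding c1_def using oa by (auto elim!: oddE)
      qed (simp add: c1_def)
      have v: "c1 b = c b" using b by (simp add: c1_def)
      show "Fb M R (a + 1) True c1 b = Fb M R a d c b"
        unfolding Fb_def using i u v by simp
    qed
    finally show ?thesis .
  qed
  have e1: "Fb M R (a + 1) True c1 a = Wf (R (a - 1)) (Tco R (a - 1)) False (c (a - 1) div 2) (c a div 2)"
  proof -
    have "a - 1 \<noteq> a" using a1 by simp
    then have "c1 (a - 1) = c (a - 1)" by (simp add: c1_def)
    moreover have "(c1 a + 1) div 2 = c a div 2" using ca by (simp add: c1_def)
    ultimately show ?thesis unfolding Fb_def by simp
  qed
  have e0: "Fb M R a d c a =
      (if 0 < c (a - 1) div 2 then (if d then R (a - 1) else Tco R (a - 1)) *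
            Wf (R (a - 1)) (Tco R (a - 1)) True (c (a - 1) div 2 - 1) (Suc (c a div 2)) else 0)
      + (if d then Tco R (a - 1) else - R (a - 1)) * Wf (R (a - 1)) (Tco R (a - 1)) False (c (a - 1) div 2) (c a div 2)"
  proof -
    have "(c a + 1) div 2 = Suc (c a div 2)" using oa by (auto elim!: oddE)
    then show ?thesis unfolding Fb_def by simp
  qed
  have sw1: "swd R d a (a + 1) = (if d then Tco R (a - 1) else - R (a - 1))"
    unfolding swd_def by auto
  show ?thesis
  proof (cases "0 < c (a - 1)")
    case False
    then have "c (a - 1) div 2 = 0" by simp
    then show ?thesis using False ca p0 p1 e0 e1 sw1 unfolding c1_def by simp
  next
    case True
    have a2: "2 \<le> a" using True cs by (cases a) (auto simp: cons_def)
    have ea: "even (c (a - 1))"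
    proof -
      have "1 \<le> a - 1 \<and> a - 1 \<le> M + 1 \<longrightarrow> (odd (c (a - 1)) \<longleftrightarrow> a \<le> a - 1)"
        using cs unfolding cons_def by blast
      then show ?thesis using a2 aM by auto
    qed
    have sw2: "swd R d a (a - 1) = (if d then R (a - 1) else Tco R (a - 1))"
      unfolding swd_def using a2 by auto
    have p2: "prodW M R (a - 1) False c2 = Fb M R (a - 1) False c2 a * P"
    proof -
      have "prodW M R (a - 1) False c2 = Fb M R (a - 1) False c2 a * (\<Prod>b\<in>?S - {a}. Fb M R (a - 1) False c2 b)"
        unfolding prodW_Fb using prod.remove[OF _ aS] by simp
      also have "(\<Prod>b\<in>?S - {a}. Fb M R (a - 1) False c2 b) = P"
        unfolding P_def
      proof (rule prod.cong[OF refl])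
        fix b assume b: "b \<in> ?S - {a}"
        have i: "(if b = a - 1 then False else a - 1 < b) = (if b = a then d else a < b)" using b a2 by auto
        have u: "c2 (b - 1) = c (b - 1)"
        proof -
          have "b - 1 \<noteq> a - 1" using b a2 by auto
          then show ?thesis by (simp add: c2_def)
        qed
        have v: "(c2 b + 1) div 2 = (c b + 1) div 2"
        proof (cases "b = a - 1")
          case True
          then show ?thesis unfolding c2_def using ea \<open>0 < c (a - 1)\<close> by (auto elim!: evenE)
        qed (simp add: c2_def)
        show "Fb M R (a - 1) False c2 b = Fb M R a d c b"
          unfolding Fb_def using i u v by simp
      qed
      finally show ?thesis .
    qed
    have e2: "Fb M R (a - 1) False c2 a = Wf (R (a - 1)) (Tco R (a - 1)) True (c (a - 1) div 2 - 1) (Suc (c a div 2))"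
    proof -
      have "c2 (a - 1) div 2 = c (a - 1) div 2 - 1" using ea True by (auto simp: c2_def elim!: evenE)
      moreover have "a \<noteq> a - 1" using a2 by simp
      then have "c2 a = c a" by (simp add: c2_def)
      moreover have "(c a + 1) div 2 = Suc (c a div 2)" using oa by (auto elim!: oddE)
      ultimately show ?thesis unfolding Fb_def using a2 \<open>a \<noteq> a - 1\<close> by simp
    qed
    have "0 < c (a - 1) div 2" using ea True by (auto elim!: evenE)
    then show ?thesis using True ca p0 p1 p2 e0 e1 e2 sw1 sw2 unfolding c1_def c2_def
      by (simp add: algebra_simps)
  qed
qed



lemma cons_down:
  assumes cs: "cons M a c" and aM: "a \<le> M + 1"
  shows "cons M (a + 1) (c(a := c a - 1))"
proof -
  have a1: "1 \<le> a" using cs by (simp add: cons_def)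
  have oa: "odd (c a)" using cs a1 aM by (simp add: cons_def)
  have par: "\<And>l. 1 \<le> l \<and> l \<le> M + 1 \<Longrightarrow> (odd (c l) \<longleftrightarrow> a \<le> l)" using cs by (simp add: cons_def)
  have p2: "odd ((c(a := c a - 1)) l) \<longleftrightarrow> a + 1 \<le> l" if l: "1 \<le> l \<and> l \<le> M + 1" for l
  proof (cases "l = a")
    case True
    then show ?thesis using oa by (cases "c a") auto
  next
    case False
    then show ?thesis using par[OF l] by auto
  qed
  show ?thesis using cs a1 aM p2 unfolding cons_def by auto
qed

lemma cons_up:
  assumes cs: "cons M a c" and aM: "a \<le> M + 1" and pos: "0 < c (a - 1)"
  shows "cons M (a - 1) (c(a - 1 := c (a - 1) - 1))"
proof -
  have a2: "2 \<le> a" using cs pos by (cases a) (auto simp: cons_def)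
  have par: "\<And>l. 1 \<le> l \<and> l \<le> M + 1 \<Longrightarrow> (odd (c l) \<longleftrightarrow> a \<le> l)" using cs by (simp add: cons_def)
  have "1 \<le> a - 1 \<and> a - 1 \<le> M + 1" using a2 aM by arith
  then have "odd (c (a - 1)) \<longleftrightarrow> a \<le> a - 1" by (rule par)
  moreover have "\<not> a \<le> a - 1" using a2 by simp
  ultimately have ea: "even (c (a - 1))" by simp
  have p2: "odd ((c(a - 1 := c (a - 1) - 1)) l) \<longleftrightarrow> a - 1 \<le> l" if l: "1 \<le> l \<and> l \<le> M + 1" for l
  proof (cases "l = a - 1")
    case True
    then show ?thesis using ea pos by (cases "c (a - 1)") auto
  next
    case False
    then show ?thesis using par[OF l] a2 by auto
  qed
  have "a - 1 \<noteq> 0" "a - 1 \<noteq> M + 1" using a2 aM by auto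
  then show ?thesis using cs a2 aM p2 unfolding cons_def by auto
qed

lemma prodW_term:
  assumes cs: "cons M (M + 2) c"
  shows "prodW M R (M + 2) d c = (if c = (\<lambda>_. 0) then 1 else 0)"
proof (cases "c = (\<lambda>_. 0)")
  case True
  then show ?thesis unfolding prodW_def by simp
next
  case False
  define L where "L = {l. 0 < c l}"
  have z: "\<forall>l > M + 1. c l = 0" using cs unfolding cons_def by blast
  have LM: "L \<subseteq> {..M+1}"
  proof
    fix l assume "l \<in> L"
    then have "c l \<noteq> 0" unfolding L_def by simp
    then show "l \<in> {..M+1}" using z by (meson atMost_iff not_le)
  qed
  have fL: "finite L" using LM finite_subset by blast
  have nL: "L \<noteq> {}" using False unfolding L_def by auto
  define m where "m = Max L"
  have mL: "m \<in> L" unfolding m_def using fL nL by (rule Max_in)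
  have cm: "0 < c m" using mL L_def by simp
  have c0: "c 0 = 0" using cs unfolding cons_def by blast
  have m1: "1 \<le> m" using cm c0 by (cases m) auto
  have mM: "m \<le> M + 1" using mL LM by auto
  have "odd (c m) \<longleftrightarrow> M + 2 \<le> m" using cs m1 mM unfolding cons_def by blast
  then have em: "even (c m)" using mM by simp
  have mM2: "m \<noteq> M + 1"
  proof
    assume "m = M + 1"
    then have "c m \<le> 1" using cs by (simp add: cons_def)
    then show False using cm em by (cases "c m") auto
  qed
  have cm1: "c (m + 1) = 0"
  proof (rule ccontr)
    assume "c (m + 1) \<noteq> 0"
    then have "m + 1 \<in> L" unfolding L_def by simp
    then have "m + 1 \<le> Max L" using fL by (simp add: Max_ge)
    then have "m + 1 \<le> m" unfolding m_def .
    then show False by simp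
  qed
  have bS: "m + 1 \<in> {1..M+1}" using mM mM2 by simp
  have "Fb M R (M + 2) d c (m + 1) = 0"
  proof -
    have "c m div 2 \<noteq> 0" using cm em by (auto elim!: evenE)
    then show ?thesis unfolding Fb_def using cm1 by simp
  qed
  then have "prodW M R (M + 2) d c = 0" unfolding prodW_Fb
    using bS by (intro prod_zero) auto
  then show ?thesis using False by simp
qed

lemma sum_upd_less:
  fixes M a :: nat and c :: "nat \<Rightarrow> nat"
  assumes "a \<le> M + 1" "0 < c a"
  shows "sum (c(a := c a - 1)) {..M+1} < sum c {..M+1}"
proof -
  have aS: "a \<in> {..M+1}" using assms by simp
  have e: "sum f {..M+1} = f a + sum f ({..M+1} - {a})" for f :: "nat \<Rightarrow> nat"
    by (rule sum.remove[OF finite_atMost aS])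
  have "sum (c(a := c a - 1)) ({..M+1} - {a}) = sum c ({..M+1} - {a})"
    by (rule sum.cong) auto
  then show ?thesis using e[of c] e[of "c(a := c a - 1)"] assms(2) by simp
qed

lemma walks_sum:
  assumes "cons M a c"
  shows "sum (wfd R d) (Walks M a c) = prodW M R a d c"
  using assms
proof (induction "sum c {..M+1}" arbitrary: a d c rule: less_induct)
  case less
  have aM: "1 \<le> a" "a \<le> M + 2" using less.prems by (auto simp: cons_def)
  show ?case
  proof (cases "a = M + 2")
    case True
    then show ?thesis using prodW_term[OF less.prems[unfolded True]] Walks_term[of M c] by simp
  next
    case False
    then have aM1: "a \<le> M + 1" using aM by simp
    have ca: "0 < c a"
    proof -
      have "odd (c a)" using less.prems aM1 aM by (simp add: cons_def)
      then show ?thesis by (cases "c a") auto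
    qed
    have IH1: "sum (wfd R True) (Walks M (a + 1) (c(a := c a - 1))) = prodW M R (a + 1) True (c(a := c a - 1))"
      using less.hyps[OF sum_upd_less[of a M c, OF aM1 ca] cons_down[OF less.prems aM1]] .
    have IH2: "sum (wfd R False) (Walks M (a - 1) (c(a - 1 := c (a - 1) - 1))) = prodW M R (a - 1) False (c(a - 1 := c (a - 1) - 1))"
      if pos: "0 < c (a - 1)"
    proof -
      have "a - 1 \<le> M + 1" using aM1 by simp
      from less.hyps[OF sum_upd_less[of "a - 1" M c, OF this pos] cons_up[OF less.prems aM1 pos]] show ?thesis .
    qed
    show ?thesis
      unfolding sum_step[OF aM(1) aM1] prodW_step[OF less.prems aM1]
      using IH1 IH2 by simp
  qed
qed



lemma okw_nth:
  "okw M q \<longleftrightarrow> q \<noteq> [] \<and> last q = M + 2 \<and>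
     (\<forall>i < length q - 1. 1 \<le> q ! i \<and> q ! i \<le> M + 1 \<and> (q ! (i+1) = q ! i + 1 \<or> q ! i = q ! (i+1) + 1))"
proof (induction M q rule: okw.induct)
  case (3 M x y r)
  have "(\<forall>i < length (x # y # r) - 1. 1 \<le> (x # y # r) ! i \<and> (x # y # r) ! i \<le> M + 1 \<and>
          ((x # y # r) ! (i+1) = (x # y # r) ! i + 1 \<or> (x # y # r) ! i = (x # y # r) ! (i+1) + 1))
      \<longleftrightarrow> (1 \<le> x \<and> x \<le> M + 1 \<and> (y = x + 1 \<or> x = y + 1)) \<and>
        (\<forall>i < length (y # r) - 1. 1 \<le> (y # r) ! i \<and> (y # r) ! i \<le> M + 1 \<and>
          ((y # r) ! (i+1) = (y # r) ! i + 1 \<or> (y # r) ! i = (y # r) ! (i+1) + 1))"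
    (is "?L \<longleftrightarrow> ?A \<and> ?B")
  proof
    assume L: ?L
    have "?A" using L[rule_format, of 0] by simp
    moreover have "?B"
    proof (intro allI impI)
      fix i assume "i < length (y # r) - 1"
      then show "1 \<le> (y # r) ! i \<and> (y # r) ! i \<le> M + 1 \<and>
          ((y # r) ! (i+1) = (y # r) ! i + 1 \<or> (y # r) ! i = (y # r) ! (i+1) + 1)"
        using L[rule_format, of "Suc i"] by simp
    qed
    ultimately show "?A \<and> ?B" by blast
  next
    assume AB: "?A \<and> ?B"
    show ?L
    proof (intro allI impI)
      fix i assume i: "i < length (x # y # r) - 1"
      show "1 \<le> (x # y # r) ! i \<and> (x # y # r) ! i \<le> M + 1 \<and>
          ((x # y # r) ! (i+1) = (x # y # r) ! i + 1 \<or> (x # y # r) ! i = (x # y # r) ! (i+1) + 1)"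
      proof (cases i)
        case 0 then show ?thesis using AB by simp
      next
        case (Suc j)
        then have "j < length (y # r) - 1" using i by simp
        then show ?thesis using AB Suc by simp
      qed
    qed
  qed
  then have LAB: "?L \<longleftrightarrow> ?A \<and> ?B" .
  have l: "last (x # y # r) = last (y # r)" by simp
  have o: "okw M (x # y # r) \<longleftrightarrow> ?A \<and> okw M (y # r)" by simp
  show ?case unfolding o "3" LAB l by blast
qed auto

lemma trans_seq_iff: "trans_seq M p \<longleftrightarrow> (\<exists>q. p = 0 # q \<and> okw M q \<and> hd q = 1)"
proof
  assume t: "trans_seq M p"
  then have len: "length p \<ge> 2" and p0: "p ! 0 = 0" and pl: "p ! (length p - 1) = M + 2"
    and pin: "\<And>i. 1 \<le> i \<Longrightarrow> i < length p - 1 \<Longrightarrow> 1 \<le> p ! i \<and> p ! i \<le> M + 1"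
    and pst: "\<And>i. i < length p - 1 \<Longrightarrow> p ! (i+1) = p ! i + 1 \<or> p ! i = p ! (i+1) + 1"
    unfolding trans_seq_def by auto
  obtain x q where pq: "p = x # q" using len by (cases p) auto
  have x0: "x = 0" using p0 pq by simp
  have qne: "q \<noteq> []" using len pq by auto
  have "p ! 1 = 1" using pst[of 0] len p0 by auto
  then have hq: "hd q = 1" using pq qne by (cases q) auto
  have "okw M q"
    unfolding okw_nth
  proof (intro conjI allI impI)
    show "q \<noteq> []" by (rule qne)
    show "last q = M + 2" using pl pq qne by (simp add: last_conv_nth)
  next
    fix i assume i: "i < length q - 1"
    have "1 \<le> p ! (Suc i) \<and> p ! (Suc i) \<le> M + 1" using pin[of "Suc i"] i pq by simp
    then show "1 \<le> q ! i" "q ! i \<le> M + 1" using pq by auto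
    show "q ! (i + 1) = q ! i + 1 \<or> q ! i = q ! (i + 1) + 1" using pst[of "Suc i"] i pq by simp
  qed
  then show "\<exists>q. p = 0 # q \<and> okw M q \<and> hd q = 1" using pq x0 hq by blast
next
  assume "\<exists>q. p = 0 # q \<and> okw M q \<and> hd q = 1"
  then obtain q where pq: "p = 0 # q" and ok: "okw M q" and hq: "hd q = 1" by blast
  have qne: "q \<noteq> []" and ql: "last q = M + 2"
    and qin: "\<And>i. i < length q - 1 \<Longrightarrow> 1 \<le> q ! i \<and> q ! i \<le> M + 1 \<and> (q ! (i+1) = q ! i + 1 \<or> q ! i = q ! (i+1) + 1)"
    using ok unfolding okw_nth by auto
  have q0: "q ! 0 = 1" using hq qne by (cases q) auto
  show "trans_seq M p"
    unfolding trans_seq_def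
  proof (intro conjI allI impI)
    show "2 \<le> length p" using pq qne by (cases q) auto
    show "p ! 0 = 0" using pq by simp
    show "p ! (length p - 1) = M + 2" using pq qne ql by (simp add: last_conv_nth)
  next
    fix i assume i: "1 \<le> i \<and> i < length p - 1"
    then obtain j where j: "i = Suc j" by (cases i) auto
    then have "j < length q - 1" using i pq by simp
    then show "1 \<le> p ! i" "p ! i \<le> M + 1" using qin j pq by auto
  next
    fix i assume i: "i < length p - 1"
    show "p ! (i + 1) = p ! i + 1 \<or> p ! i = p ! (i + 1) + 1"
    proof (cases i)
      case 0 then show ?thesis using pq q0 by simp
    next
      case (Suc j)
      then have "j < length q - 1" using i pq by simp
      then show ?thesis using qin Suc pq by simp
    qed
  qed
qed

lemma step_weight_shift: "1 \<le> i \<Longrightarrow> step_weight R (a # q) (Suc i) = step_weight R q i"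
  by (cases i) (simp_all add: step_weight_def Let_def)

lemma sum_ind: fixes m N :: nat shows "m \<le> N \<Longrightarrow> (\<Sum>l\<le>N. (if l = m then 1 else 0) * (g l :: real)) = g m"
proof -
  assume "m \<le> N"
  have "(\<Sum>l\<le>N. (if l = m then 1 else 0) * g l) = (\<Sum>l\<le>N. if l = m then g l else 0)"
    by (rule sum.cong) auto
  also have "\<dots> = g m" using \<open>m \<le> N\<close> sum.delta[of "{..N}" m g] by simp
  finally show ?thesis .
qed

lemma sw_link:
  assumes "okw M q" "prev + 1 = hd q \<or> prev = hd q + 1"
  shows "(\<Prod>i\<in>{1..<length q}. step_weight R (prev # q) i) = wfd R (prev + 1 = hd q) q"
  using assms
proof (induction M q arbitrary: prev rule: okw.induct)
  case (3 M x y r)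
  have ok: "okw M (y # r)" "x + 1 = y \<or> x = y + 1" using "3.prems" by auto
  have x1: "1 \<le> x" using "3.prems" by simp
  have IH: "(\<Prod>i\<in>{1..<length (y # r)}. step_weight R (x # y # r) i) = wfd R (x + 1 = y) (y # r)"
    using "3.IH"[of x] ok by simp
  have split: "{1..<length (x # y # r)} = insert 1 {Suc 1..<Suc (length (y # r))}" by auto
  have "(\<Prod>i\<in>{Suc 1..<Suc (length (y # r))}. step_weight R (prev # x # y # r) i)
        = (\<Prod>i\<in>{1..<length (y # r)}. step_weight R (prev # x # y # r) (Suc i))"
    by (rule prod.shift_bounds_Suc_ivl)
  also have "\<dots> = (\<Prod>i\<in>{1..<length (y # r)}. step_weight R (x # y # r) i)"
  proof (rule prod.cong[OF refl])
    fix i assume "i \<in> {1..<length (y # r)}"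
    then have "1 \<le> i" by simp
    then show "step_weight R (prev # x # y # r) (Suc i) = step_weight R (x # y # r) i"
      by (rule step_weight_shift)
  qed
  finally have rest: "(\<Prod>i\<in>{Suc 1..<Suc (length (y # r))}. step_weight R (prev # x # y # r) i) = wfd R (x + 1 = y) (y # r)"
    using IH by simp
  have first: "step_weight R (prev # x # y # r) 1 = swd R (prev + 1 = x) x y"
    using "3.prems"(2) x1 unfolding step_weight_def swd_def Let_def by auto
  have "(\<Prod>i\<in>{1..<length (x # y # r)}. step_weight R (prev # x # y # r) i)
      = step_weight R (prev # x # y # r) 1 * (\<Prod>i\<in>{Suc 1..<Suc (length (y # r))}. step_weight R (prev # x # y # r) i)"
    unfolding split by (subst prod.insert) auto
  also have "\<dots> = swd R (prev + 1 = x) x y * wfd R (x + 1 = y) (y # r)" using first rest by simp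
  also have "\<dots> = wfd R (prev + 1 = hd (x # y # r)) (x # y # r)"
  proof -
    have e: "(x + 1 = y) = (y = x + 1)" by auto
    show ?thesis unfolding e by simp
  qed
  finally show ?case .
qed auto

lemma arr_cross:
  assumes "set p \<subseteq> {..N}"
  shows "(\<Sum>i<length p - 1. f (min (p ! i) (p ! (i+1)))) = (\<Sum>l\<le>N. real (cross p l) * f l)"
  using assms
proof (induction p rule: cross.induct)
  case (3 x y r)
  have IH: "(\<Sum>i<length (y # r) - 1. f (min ((y # r) ! i) ((y # r) ! (i+1)))) = (\<Sum>l\<le>N. real (cross (y # r) l) * f l)"
    using 3 by simp
  have mN: "min x y \<in> {..N}" using "3.prems" by auto
  have "(\<Sum>i<length (x # y # r) - 1. f (min ((x # y # r) ! i) ((x # y # r) ! (i+1))))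
      = f (min x y) + (\<Sum>i<length (y # r) - 1. f (min ((y # r) ! i) ((y # r) ! (i+1))))"
  proof -
    have "length (x # y # r) - 1 = Suc (length (y # r) - 1)" by simp
    then show ?thesis by (simp only: sum.lessThan_Suc_shift) simp
  qed
  also have "\<dots> = (\<Sum>l\<le>N. real (cross (x # y # r) l) * f l)"
    unfolding IH using mN by (simp add: sum.distrib distrib_right if_distrib[of real] sum_ind cong: if_cong)
  finally show ?case .
qed auto

lemma okw_cons: "okw M q \<Longrightarrow> cons M (hd q) (cross q)"
proof (induction M q rule: okw.induct)
  case (2 M x)
  then show ?case by (simp add: cons_def)
next
  case (3 M x y r)
  have x: "1 \<le> x" "x \<le> M + 1" and st: "y = x + 1 \<or> x = y + 1" and ok: "okw M (y # r)"
    using "3.prems" by auto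
  have cs: "cons M y (cross (y # r))" using "3.IH" ok by simp
  define c' where "c' = cross (y # r)"
  have y1: "1 \<le> y" using cs by (simp add: cons_def)
  have c'0: "c' 0 = 0" and c'z: "\<forall>l > M + 1. c' l = 0" and c'M: "c' (M + 1) \<le> 1"
    and par: "\<And>l. 1 \<le> l \<and> l \<le> M + 1 \<Longrightarrow> (odd (c' l) \<longleftrightarrow> y \<le> l)"
    using cs unfolding cons_def c'_def by auto
  have cc: "cross (x # y # r) = (\<lambda>l. (if l = min x y then 1 else 0) + c' l)" unfolding c'_def by simp
  have m1: "1 \<le> min x y" using x y1 by simp
  have m2: "min x y \<le> M + 1" using x by simp
  have A: "(if M + 1 = min x y then 1 else 0) + c' (M + 1) \<le> 1"
  proof (cases "M + 1 = min x y")
    case True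
    then have "x = M + 1" "y = M + 2" using x st by auto
    then have "even (c' (M + 1))" using par[of "M + 1"] by simp
    then have "c' (M + 1) = 0" using c'M by (cases "c' (M + 1)") auto
    then show ?thesis by simp
  qed (use c'M in simp)
  have B: "odd ((if l = min x y then 1 else 0) + c' l) \<longleftrightarrow> x \<le> l" if l: "1 \<le> l \<and> l \<le> M + 1" for l
  proof (cases "y = x + 1")
    case True
    then show ?thesis using par[OF l] by auto
  next
    case False
    then have yx: "y = x - 1" "1 \<le> x - 1" using st y1 by auto
    then have mxy: "min x y = x - 1" by simp
    show ?thesis using par[OF l] yx unfolding mxy by auto
  qed
  show ?case unfolding cc cons_def using x m1 m2 c'0 c'z A B by auto
qed auto



definition cvec :: "nat \<Rightarrow> (nat \<Rightarrow> nat) \<Rightarrow> nat \<Rightarrow> nat" where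
  "cvec M k l = (if l = 0 then 0 else if l \<le> M then 2 * k l + 1 else if l = M + 1 then 1 else 0)"

lemma cons_cvec: "cons M 1 (cvec M k)"
  unfolding cons_def cvec_def by auto

lemma Fb_cvec:
  assumes k: "k \<in> kset M" and n: "n \<le> M"
  shows "Fb M R 1 True (cvec M k) (Suc n) = Wf (R n) (Tco R n) True (k n) (Suc (ktilde M k n))"
proof -
  have k0: "k 0 = 0" using k by (simp add: kset_def)
  have a: "cvec M k n div 2 = k n"
    using k0 n by (cases "n = 0") (auto simp: cvec_def)
  have b: "(cvec M k (Suc n) + 1) div 2 = Suc (ktilde M k n)"
  proof (cases "n < M")
    case True
    then show ?thesis by (simp add: cvec_def ktilde_def)
  next
    case False
    then have "n = M" using n by simp
    then show ?thesis by (simp add: cvec_def ktilde_def)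
  qed
  show ?thesis unfolding Fb_def using a b by simp
qed

lemma cfA_min:
  "cfA r t q j = (\<Sum>m\<le>min q j. real (q choose m) * real (j choose m) * (- r) ^ (j - m) * r ^ (q - m) * t ^ (2 * m + 1))"
  unfolding cfA_def
  by (rule sum.mono_neutral_cong_right) (auto simp: mult_ac)

lemma bcoef_prodW:
  assumes k: "k \<in> kset M"
  shows "bcoef M R k = prodW M R 1 True (cvec M k)"
proof -
  define B where "B n = min (k n) (ktilde M k n)" for n
  define g where "g n i = real (k n choose i) * real (ktilde M k n choose i)
                 * (- R n) ^ (ktilde M k n - i) * (R n) ^ (k n - i) * (Tco R n) ^ (2 * i + 1)" for n i
  have "prodW M R 1 True (cvec M k) = (\<Prod>b\<in>{Suc 0..Suc M}. Fb M R 1 True (cvec M k) b)"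
    unfolding prodW_Fb by simp
  also have "\<dots> = (\<Prod>n\<in>{0..M}. Fb M R 1 True (cvec M k) (Suc n))"
    by (rule prod.shift_bounds_cl_Suc_ivl)
  also have "\<dots> = (\<Prod>n\<in>{..M}. \<Sum>i\<in>{..B n}. g n i)"
  proof (rule prod.cong)
    show "{0..M} = {..M}" by auto
  next
    fix n assume "n \<in> {..M}"
    then have "Fb M R 1 True (cvec M k) (Suc n) = cfA (R n) (Tco R n) (k n) (ktilde M k n)"
      using Fb_cvec[OF k] Wf_closed by simp
    also have "\<dots> = (\<Sum>i\<in>{..B n}. g n i)" unfolding cfA_min B_def g_def ..
    finally show "Fb M R 1 True (cvec M k) (Suc n) = (\<Sum>i\<in>{..B n}. g n i)" .
  qed
  also have "\<dots> = (\<Sum>h\<in>PiE {..M} (\<lambda>n. {..B n}). \<Prod>n\<in>{..M}. g n (h n))"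
    by (rule prod_sum_PiE; simp)
  also have "\<dots> = bcoef M R k"
    unfolding bcoef_def
  proof (rule sum.reindex_bij_witness[where j = "\<lambda>h n. if n \<le> M then h n else 0" and i = "\<lambda>m. restrict m {..M}"])
    fix m assume "m \<in> {m. (\<forall>n\<le>M. m n \<le> min (k n) (ktilde M k n)) \<and> (\<forall>n>M. m n = 0)}"
    then have m: "\<forall>n\<le>M. m n \<le> B n" "\<forall>n>M. m n = 0" unfolding B_def by auto
    show "(\<lambda>n. if n \<le> M then restrict m {..M} n else 0) = m"
      using m by (auto simp: fun_eq_iff)
    show "restrict m {..M} \<in> PiE {..M} (\<lambda>n. {..B n})" using m by auto
  next
    fix h assume h: "h \<in> PiE {..M} (\<lambda>n. {..B n})"
    show "restrict (\<lambda>n. if n \<le> M then h n else 0) {..M} = h"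
      using h by (auto simp: fun_eq_iff PiE_def extensional_def)
    show "(\<lambda>n. if n \<le> M then h n else 0) \<in> {m. (\<forall>n\<le>M. m n \<le> min (k n) (ktilde M k n)) \<and> (\<forall>n>M. m n = 0)}"
      using h unfolding B_def by (auto simp: PiE_def Pi_def)
    show "(\<Prod>n\<le>M. real (k n choose (if n \<le> M then h n else 0)) * real (ktilde M k n choose (if n \<le> M then h n else 0)) *
            (- R n) ^ (ktilde M k n - (if n \<le> M then h n else 0)) * R n ^ (k n - (if n \<le> M then h n else 0)) *
            Tco R n ^ (2 * (if n \<le> M then h n else 0) + 1)) = (\<Prod>n\<in>{..M}. g n (h n))"
      unfolding g_def by (rule prod.cong) auto
  qed
  finally show ?thesis ..
qed

lemma nat_le_ceil: "real i \<le> x \<Longrightarrow> i \<le> nat \<lceil>x\<rceil>"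
proof -
  assume "real i \<le> x"
  then have "real i \<le> of_int \<lceil>x\<rceil>" using le_of_int_ceiling order_trans by blast
  then have "int i \<le> \<lceil>x\<rceil>" by linarith
  then show ?thesis by linarith
qed

lemma finite_Ks:
  fixes tau' :: "nat \<Rightarrow> real"
  assumes pos: "\<And>n. n \<le> M \<Longrightarrow> 0 < tau' n" and C: "0 \<le> C"
  shows "finite {k \<in> kset M. C + (\<Sum>n\<le>M. real (k n) * tau' n) = s}"
proof -
  define N where "N = (\<Sum>n\<le>M. nat \<lceil>s / tau' n\<rceil>)"
  define ext where "ext h = (\<lambda>n. if n \<le> M then h n else (0::nat))" for h :: "nat \<Rightarrow> nat"
  have "{k \<in> kset M. C + (\<Sum>n\<le>M. real (k n) * tau' n) = s} \<subseteq> ext ` PiE {..M} (\<lambda>_. {..N})"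
  proof
    fix k assume "k \<in> {k \<in> kset M. C + (\<Sum>n\<le>M. real (k n) * tau' n) = s}"
    then have kk: "k \<in> kset M" and ks: "C + (\<Sum>n\<le>M. real (k n) * tau' n) = s" by auto
    have bnd: "k n \<le> N" if n: "n \<le> M" for n
    proof -
      have "real (k n) * tau' n \<le> (\<Sum>n\<le>M. real (k n) * tau' n)"
      proof (rule member_le_sum)
        fix x assume "x \<in> {..M} - {n}"
        then have "0 < tau' x" using pos by auto
        then show "0 \<le> real (k x) * tau' x" by simp
      qed (use n in auto)
      then have "real (k n) * tau' n \<le> s" using ks C by linarith
      then have "real (k n) \<le> s / tau' n" using pos[OF n] by (simp add: le_divide_eq)
      then have "k n \<le> nat \<lceil>s / tau' n\<rceil>" by (rule nat_le_ceil)
      also have "\<dots> \<le> N" unfolding N_def using n by (intro member_le_sum) auto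
      finally show ?thesis .
    qed
    have "k = ext (restrict k {..M})" using kk unfolding ext_def kset_def by (auto simp: fun_eq_iff)
    moreover have "restrict k {..M} \<in> PiE {..M} (\<lambda>_. {..N})" using bnd by auto
    ultimately show "k \<in> ext ` PiE {..M} (\<lambda>_. {..N})" by blast
  qed
  moreover have "finite (ext ` PiE {..M} (\<lambda>_. {..N}))" by (intro finite_imageI finite_PiE) auto
  ultimately show ?thesis by (rule finite_subset)
qed



lemma arr_link:
  assumes ok: "okw M q" and hq: "hd q = 1" and cq: "cross q = cvec M k" and k: "k \<in> kset M"
  shows "arrival tau' (0 # q) = (\<Sum>n\<le>M + 1. tau' n) / 2 + (\<Sum>n\<le>M. real (k n) * tau' n)"
proof -
  obtain r where qr: "q = 1 # r" using ok hq by (cases q) auto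
  have cr: "cross (0 # q) = (\<lambda>l. (if l = 0 then 1 else 0) + cvec M k l)"
    using cq qr by simp
  have st: "set (0 # q) \<subseteq> {..M + 2}" using okw_set[OF ok] by auto
  have "arrival tau' (0 # q) = (\<Sum>i<length (0 # q) - 1. (\<lambda>l. tau' l / 2) (min ((0 # q) ! i) ((0 # q) ! (i+1))))"
    unfolding arrival_def by simp
  also have "\<dots> = (\<Sum>l\<le>M + 2. real (cross (0 # q) l) * (tau' l / 2))"
    by (rule arr_cross[OF st])
  also have "\<dots> = (\<Sum>l\<le>M + 1. real (cross (0 # q) l) * (tau' l / 2))"
  proof -
    have "cross (0 # q) (Suc (M + 1)) = 0" unfolding cr by (simp add: cvec_def)
    then show ?thesis by (simp add: sum.atMost_Suc)
  qed
  also have "\<dots> = (\<Sum>l\<le>M + 1. tau' l / 2 + real (k l) * tau' l)"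
  proof (rule sum.cong[OF refl])
    fix l assume l: "l \<in> {..M + 1}"
    have k0: "k 0 = 0" and kM: "k (M + 1) = 0" using k by (auto simp: kset_def)
    have "(if l = 0 then 1 else 0) + cvec M k l = 2 * k l + 1"
      using l k0 kM by (cases "l = M + 1") (auto simp: cvec_def)
    then show "real (cross (0 # q) l) * (tau' l / 2) = tau' l / 2 + real (k l) * tau' l"
      unfolding cr by (simp add: algebra_simps)
  qed
  also have "\<dots> = (\<Sum>l\<le>M + 1. tau' l) / 2 + (\<Sum>l\<le>M + 1. real (k l) * tau' l)"
    by (simp add: sum.distrib flip: sum_divide_distrib)
  also have "(\<Sum>l\<le>M + 1. real (k l) * tau' l) = (\<Sum>l\<le>M. real (k l) * tau' l)"
    using k by (simp add: kset_def)
  finally show ?thesis .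
qed

theorem theorem2:
  fixes M :: nat and tau' R :: "nat \<Rightarrow> real"
  assumes "M \<ge> 1"
    and "\<And>n. n \<le> M + 1 \<Longrightarrow> tau' n > 0"
    and "\<And>n. n \<le> M \<Longrightarrow> -1 < R n \<and> R n < 1"
  shows "\<forall>s. greenH M tau' R s = rhsH M tau' R s"
proof
  fix s
  define C where "C = (\<Sum>n\<le>M + 1. tau' n) / 2"
  define Ks where "Ks = {k \<in> kset M. C + (\<Sum>n\<le>M. real (k n) * tau' n) = s}"
  define TS where "TS = {p. trans_seq M p \<and> arrival tau' p = s}"
  define SG where "SG = (SIGMA k:Ks. Walks M 1 (cvec M k))"
  define F where "F = (\<lambda>(k :: nat \<Rightarrow> nat, q :: nat list). 0 # q)"
  have "\<forall>n\<in>{..M + 1}. 0 \<le> tau' n" using assms(2) by (simp add: less_imp_le)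
  then have "0 \<le> (\<Sum>n\<le>M + 1. tau' n)" by (intro sum_nonneg) blast
  then have C0: "0 \<le> C" unfolding C_def by simp
  have fK: "finite Ks" unfolding Ks_def by (rule finite_Ks[OF _ C0]) (use assms(2) in auto)
  have fSG: "finite SG" unfolding SG_def using fK finite_Walks by (intro finite_SigmaI) auto
  have TSeq: "TS = F ` SG"
  proof (intro set_eqI iffI)
    fix p assume "p \<in> TS"
    then have t: "trans_seq M p" and ar: "arrival tau' p = s" unfolding TS_def by auto
    then obtain q where pq: "p = 0 # q" and ok: "okw M q" and hq: "hd q = 1"
      unfolding trans_seq_iff by blast
    define c where "c = cross q"
    have cs: "cons M 1 c" using okw_cons[OF ok] hq unfolding c_def by simp
    define k where "k = (\<lambda>l. if 1 \<le> l \<and> l \<le> M then c l div 2 else 0)"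
    have kk: "k \<in> kset M" unfolding k_def kset_def by auto
    have ck: "cvec M k = c"
    proof
      fix l
      show "cvec M k l = c l"
      proof (cases "l = 0")
        case True then show ?thesis using cs by (simp add: cvec_def cons_def)
      next
        case False
        show ?thesis
        proof (cases "l \<le> M + 1")
          case True
          then have "odd (c l)" using cs False by (simp add: cons_def)
          moreover have "l = M + 1 \<Longrightarrow> c l \<le> 1" using cs by (simp add: cons_def)
          ultimately show ?thesis using False True
            by (cases "l = M + 1") (auto simp: cvec_def k_def elim!: oddE)
        next
          case False2: False
          then show ?thesis using cs False by (simp add: cvec_def cons_def)
        qed
      qed
    qed
    have qW: "q \<in> Walks M 1 (cvec M k)" unfolding Walks_def ck c_def using ok hq by simp
    have "arrival tau' (0 # q) = C + (\<Sum>n\<le>M. real (k n) * tau' n)"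
      unfolding C_def using arr_link[OF ok hq _ kk] ck c_def by simp
    then have "k \<in> Ks" unfolding Ks_def using kk ar pq by simp
    then have "(k, q) \<in> SG" unfolding SG_def using qW by simp
    then show "p \<in> F ` SG" unfolding F_def pq by force
  next
    fix p assume "p \<in> F ` SG"
    then obtain k q where kq: "(k, q) \<in> SG" and pq: "p = 0 # q" unfolding F_def by auto
    then have kK: "k \<in> Ks" and qW: "q \<in> Walks M 1 (cvec M k)" unfolding SG_def by auto
    then have ok: "okw M q" and hq: "hd q = 1" and cq: "cross q = cvec M k" unfolding Walks_def by auto
    have kk: "k \<in> kset M" using kK unfolding Ks_def by simp
    have "trans_seq M p" unfolding trans_seq_iff pq using ok hq by blast
    moreover have "arrival tau' p = s"
      unfolding pq arr_link[OF ok hq cq kk] using kK unfolding Ks_def C_def by simp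
    ultimately show "p \<in> TS" unfolding TS_def by simp
  qed
  have inj: "inj_on F SG"
  proof (rule inj_onI)
    fix x y assume x: "x \<in> SG" and y: "y \<in> SG" and e: "F x = F y"
    obtain k1 q1 where x1: "x = (k1, q1)" by (cases x)
    obtain k2 q2 where y2: "y = (k2, q2)" by (cases y)
    have qq: "q1 = q2" using e x1 y2 unfolding F_def by simp
    have c1: "cross q1 = cvec M k1" and k1: "k1 \<in> kset M" using x x1 unfolding SG_def Walks_def Ks_def by auto
    have c2: "cross q2 = cvec M k2" and k2: "k2 \<in> kset M" using y y2 unfolding SG_def Walks_def Ks_def by auto
    have cc: "cvec M k1 = cvec M k2" using c1 c2 qq by simp
    have "k1 = k2"
    proof
      fix l
      show "k1 l = k2 l"
      proof (cases "1 \<le> l \<and> l \<le> M")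
        case True
        then have "2 * k1 l + 1 = 2 * k2 l + 1" using fun_cong[OF cc, of l] by (simp add: cvec_def)
        then show ?thesis by simp
      next
        case False
        then have "l = 0 \<or> l > M" by auto
        then show ?thesis using k1 k2 by (auto simp: kset_def)
      qed
    qed
    then show "x = y" using x1 y2 qq by simp
  qed
  have "greenH M tau' R s = sum (seq_weight R) TS"
    unfolding greenH_def TS_def ..
  also have "\<dots> = sum (seq_weight R \<circ> F) SG"
    unfolding TSeq by (rule sum.reindex[OF inj])
  also have "\<dots> = (\<Sum>(k, q)\<in>SG. seq_weight R (0 # q))"
    unfolding F_def by (rule sum.cong) (auto split: prod.split)
  also have "\<dots> = (\<Sum>k\<in>Ks. \<Sum>q\<in>Walks M 1 (cvec M k). seq_weight R (0 # q))"
    unfolding SG_def by (rule sum.Sigma[symmetric]) (use fK finite_Walks in auto)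
  also have "\<dots> = (\<Sum>k\<in>Ks. \<Sum>q\<in>Walks M 1 (cvec M k). wfd R True q)"
  proof (intro sum.cong refl)
    fix k q assume "q \<in> Walks M 1 (cvec M k)"
    then have ok: "okw M q" and hq: "hd q = 1" unfolding Walks_def by auto
    have "seq_weight R (0 # q) = (\<Prod>i\<in>{1..<length q}. step_weight R (0 # q) i)"
      unfolding seq_weight_def by simp
    also have "\<dots> = wfd R (0 + 1 = hd q) q" by (rule sw_link[OF ok]) (use hq in simp)
    finally show "seq_weight R (0 # q) = wfd R True q" using hq by simp
  qed
  also have "\<dots> = (\<Sum>k\<in>Ks. prodW M R 1 True (cvec M k))"
    by (intro sum.cong refl walks_sum cons_cvec)
  also have "\<dots> = (\<Sum>k\<in>Ks. bcoef M R k)"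
    by (intro sum.cong refl bcoef_prodW[symmetric]) (simp add: Ks_def)
  also have "\<dots> = rhsH M tau' R s"
    unfolding rhsH_def Ks_def C_def ..
  finally show "greenH M tau' R s = rhsH M tau' R s" .
qed


end
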